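(* Let $n\ge1$ and let $\mathcal{D}_{S_1},\mathcal{D}_{S_2}\subseteq\mathcal{D}_{[n]}\setminus\{n\}$ be such that $\mathrm{ICG}(n,\mathcal{D}_{S_1})$ and $\mathrm{ICG}(n,\mathcal{D}_{S_2})$ are isospectral. Let $\mathcal{D}_R\subseteq\mathcal{D}_{[n]}$ be such that $\lambda_d(S_1)=\lambda_d(S_2)$ for all $d\in\mathcal{D}_R$. Let $\mathcal{D}_T\subseteq\mathcal{D}_{[n]}\setminus\mathcal{D}_R$ be such that (1) there is $d_0\in\mathcal{D}_T$ with $\lambda_d(S_1)=\lambda_{d_0}(S_1)$ for all $d\in\mathcal{D}_T$, and (2) $\sum_{d\in\mathcal{D}_T}\phi(n/d)>n-\sum_{d\in\mathcal{D}_R}\phi(n/d)-\sum_{d\in\mathcal{D}_T}\phi(n/d)$. Then there exists $d_0'\in\mathcal{D}_T$ with $\lambda_{d_0'}(S_2)=\lambda_{d_0}(S_1)$. In particular, if $\mathcal{D}_T=\{d_0\}$ then $\lambda_{d_0}(S_1)=\lambda_{d_0}(S_2)$.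
   Context: Identify $\mathbb{Z}_n$ with $[n]=\{1,\dots,n\}$. For a divisor $d$ of $n$, $G_n(d)=\{j\in[n]:\gcd(j,n)=d\}$; $\mathcal{D}_{[n]}$ is the set of positive divisors of $n$. For $\mathcal{D}\subseteq\mathcal{D}_{[n]}\setminus\{n\}$, $\mathrm{ICG}(n,\mathcal{D})=\mathrm{Cay}(\mathbb{Z}_n,S)$ with $S=\bigcup_{d\in\mathcal{D}}G_n(d)$, and $\mathcal{D}=\mathcal{D}_S$. For $k\in[n]$, $\lambda_k(S)=\sum_{g\in S}e^{2\pi\iota kg/n}$; the eigenvalues of $\mathrm{Cay}(\mathbb{Z}_n,S)$ with multiplicity are $\lambda_1(S),\dots,\lambda_n(S)$. $\phi$ is Euler's totient function. Isospectral means having the same multiset of adjacency eigenvalues. *)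

theory Defs
  imports "HOL-Analysis.Analysis" "HOL-Number_Theory.Number_Theory" "HOL-Library.Multiset"
begin

text \<open>Z_n identified with [n] = {1..n}.  G_n(d) = {j in [n] : gcd j n = d}.\<close>
definition G :: "nat \<Rightarrow> nat \<Rightarrow> nat set" where
  "G n d = {j \<in> {1..n}. gcd j n = d}"

definition divisors_of :: "nat \<Rightarrow> nat set" where
  "divisors_of n = {d. d > 0 \<and> d dvd n}"

definition icg_set :: "nat \<Rightarrow> nat set \<Rightarrow> nat set" where
  "icg_set n D = (\<Union>d\<in>D. G n d)"

definition lam :: "nat \<Rightarrow> nat set \<Rightarrow> nat \<Rightarrow> complex" where
  "lam n S k = (\<Sum>g\<in>S. exp (2 * of_real pi * \<i> * of_nat k * of_nat g / of_nat n))"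

text \<open>Adjacency spectrum (with multiplicity) of Cay(Z_n, S): lambda_1(S),...,lambda_n(S).\<close>
definition cay_spectrum :: "nat \<Rightarrow> nat set \<Rightarrow> complex multiset" where
  "cay_spectrum n S = image_mset (lam n S) (mset_set {1..n})"

definition isospectral :: "nat \<Rightarrow> nat set \<Rightarrow> nat set \<Rightarrow> bool" where
  "isospectral n S1 S2 \<longleftrightarrow> cay_spectrum n S1 = cay_spectrum n S2"

end

theory Submission
  imports Defs
begin

lemma unit_lift:
  fixes a m n :: nat
  assumes "n > 0" "m dvd n" "coprime a m"
  shows "\<exists>u. coprime u n \<and> [u = a] (mod m)"
proof -
  define P where "P = {p::nat. prime p \<and> p dvd n \<and> \<not> p dvd a}"
  have fin: "finite P"
    by (rule finite_subset[of _ "{..n}"]) (use assms(1) in \<open>auto simp: P_def dest: dvd_imp_le\<close>)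
  define t where "t = \<Prod>P"
  have tdvd: "p dvd t" if "p \<in> P" for p
    unfolding t_def using fin that by (rule dvd_prodI)
  have tndvd: "p dvd n \<and> \<not> p dvd a" if "prime p" "p dvd t" for p
  proof -
    from that fin obtain q where "q \<in> P" "p dvd q" unfolding t_def
      by (auto simp: prime_dvd_prod_iff)
    then have "p = q" using that(1) by (auto simp: P_def intro: primes_dvd_imp_eq)
    with \<open>q \<in> P\<close> show ?thesis by (auto simp: P_def)
  qed
  define u where "u = a + m * t"
  have "[u = a] (mod m)" by (simp add: u_def cong_def)
  moreover have "coprime u n"
  proof (rule ccontr)
    assume "\<not> coprime u n"
    then have "gcd u n \<noteq> 1" using coprime_iff_gcd_eq_1 by blast
    then obtain p where p: "prime p" "p dvd gcd u n" using prime_factor_nat[of "gcd u n"] by auto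
    have pu: "p dvd u" using p(2) dvd_trans gcd_dvd1 by blast
    have pn: "p dvd n" using p(2) dvd_trans gcd_dvd2 by blast
    show False
    proof (cases "p dvd a")
      case True
      have "\<not> p dvd m"
      proof
        assume "p dvd m"
        then have "is_unit p" using coprime_common_divisor[OF assms(3) True] by simp
        with p(1) show False by simp
      qed
      moreover have "\<not> p dvd t" using tndvd[OF p(1)] True by blast
      ultimately have "\<not> p dvd m * t" by (simp add: prime_dvd_mult_iff[OF p(1)])
      moreover have "p dvd m * t" using pu True unfolding u_def
        by (simp add: dvd_add_right_iff[OF True])
      ultimately show False by blast
    next
      case False
      then have "p \<in> P" using p(1) pn by (simp add: P_def)
      then have "p dvd m * t" using tdvd by simp
      then have "p dvd a" using pu unfolding u_def by (simp add: dvd_add_left_iff)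
      with False show False by blast
    qed
  qed
  ultimately show ?thesis by blast
qed

definition zz :: "nat \<Rightarrow> nat \<Rightarrow> complex" where
  "zz n x = exp (2 * of_real pi * \<i> * of_nat x / of_nat n)"

lemma zz_mod: assumes "n > 0" shows "zz n x = zz n (x mod n)"
proof -
  have x: "x = x mod n + n * (x div n)" by simp
  have xx: "(of_nat x :: complex) = of_nat (x mod n) + of_nat n * of_nat (x div n)"
    by (metis x of_nat_add of_nat_mult)
  have "2 * of_real pi * \<i> * of_nat x / of_nat n =
        2 * of_real pi * \<i> * of_nat (x mod n) / of_nat n + of_nat (x div n) * (2 * of_real pi * \<i>)"
    using assms unfolding xx by (simp add: field_simps)
  then have "zz n x = zz n (x mod n) * exp (of_nat (x div n) * (2 * of_real pi * \<i>))"
    unfolding zz_def by (simp add: exp_add)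
  also have "exp (of_nat (x div n) * (2 * of_real pi * \<i>)) = 1"
    by (simp only: exp_of_nat_mult exp_two_pi_i power_one)
  finally show ?thesis by simp
qed

lemma zz_cong: assumes "n > 0" "[x = y] (mod n)" shows "zz n x = zz n y"
  using assms zz_mod[of n x] zz_mod[of n y] by (simp add: cong_def)

lemma lam_zz: "lam n S k = (\<Sum>g\<in>S. zz n (k * g))"
  unfolding lam_def zz_def by (simp add: mult.assoc)


lemma cong_in_range_eq:
  fixes a b n :: nat
  assumes "a \<in> {1..n}" "b \<in> {1..n}" "[a = b] (mod n)"
  shows "a = b"
proof -
  have m: "a mod n = b mod n" using assms(3) by (simp add: cong_def)
  show ?thesis
  proof (cases "a = n")
    case True
    then have "b mod n = 0" using m by simp
    then show ?thesis using assms(2) True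
      by (metis atLeastAtMost_iff le_neq_implies_less mod_less not_one_le_zero)
  next
    case False
    then have "a < n" using assms(1) by simp
    then have "a mod n = a" by simp
    show ?thesis
    proof (cases "b = n")
      case True
      then have "a mod n = 0" using m by simp
      then show ?thesis using assms(1) \<open>a mod n = a\<close> by simp
    next
      case False
      then have "b < n" using assms(2) by simp
      then show ?thesis using m \<open>a mod n = a\<close> by simp
    qed
  qed
qed

lemma reindex_unit:
  fixes n u c :: nat and D :: "nat set"
  assumes n: "n > 0" and u: "coprime u n"
  defines "S \<equiv> {g\<in>{1..n}. gcd g n \<in> D}"
  shows "(\<Sum>g\<in>S. zz n (c * (u * g))) = (\<Sum>g\<in>S. zz n (c * g))"
proof -
  define r where "r g = (if u * g mod n = 0 then n else u * g mod n)" for g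
  have r_range: "r g \<in> {1..n}" for g
    using n by (auto simp: r_def less_imp_le)
  have r_cong: "[r g = u * g] (mod n)" for g
    by (auto simp: r_def cong_def)
  have r_gcd: "gcd (r g) n = gcd g n" for g
  proof -
    have "gcd (r g) n = gcd (u * g) n" using cong_gcd_eq[OF r_cong] .
    also have "\<dots> = gcd g n" using u by (simp add: gcd_mult_left_left_cancel coprime_commute)
    finally show ?thesis .
  qed
  have sub: "r ` S \<subseteq> S" using r_range r_gcd by (auto simp: S_def)
  have inj: "inj_on r S"
  proof (rule inj_onI)
    fix x y assume xy: "x \<in> S" "y \<in> S" "r x = r y"
    have "[u * x = u * y] (mod n)"
      using r_cong[of x] r_cong[of y] xy(3) by (metis cong_sym cong_trans)
    then have "[x = y] (mod n)" using cong_mult_lcancel_nat[OF u] by simp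
    then show "x = y" using xy(1,2) cong_in_range_eq by (auto simp: S_def)
  qed
  have fin: "finite S" by (simp add: S_def)
  have bij: "bij_betw r S S"
    using endo_inj_surj[OF fin sub inj] inj by (simp add: bij_betw_def)
  have "(\<Sum>g\<in>S. zz n (c * (u * g))) = (\<Sum>g\<in>S. zz n (c * r g))"
  proof (rule sum.cong[OF refl])
    fix g show "zz n (c * (u * g)) = zz n (c * r g)"
      using zz_cong[OF n] cong_scalar_left[OF r_cong[of g], of c] cong_sym by blast
  qed
  also have "\<dots> = (\<Sum>g\<in>S. zz n (c * g))"
    using sum.reindex_bij_betw[OF bij, of "\<lambda>h. zz n (c * h)"] by simp
  finally show ?thesis .
qed

lemma lam_gcd:
  fixes n k :: nat and D :: "nat set"
  assumes n: "n > 0"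
  shows "lam n {g\<in>{1..n}. gcd g n \<in> D} k = lam n {g\<in>{1..n}. gcd g n \<in> D} (gcd k n)"
proof -
  define S where "S = {g\<in>{1..n}. gcd g n \<in> D}"
  define d where "d = gcd k n"
  have d0: "d > 0" using n by (simp add: d_def)
  define a where "a = k div d"
  define m where "m = n div d"
  have ka: "k = d * a" by (simp add: a_def d_def)
  have nm: "n = d * m" by (simp add: m_def d_def)
  have cop: "coprime a m" unfolding a_def m_def d_def using div_gcd_coprime n by blast
  have "m dvd n" using nm by simp
  then obtain u where u: "coprime u n" "[u = a] (mod m)" using unit_lift[OF n _ cop] by blast
  have "[d * u = d * a] (mod d * m)" using cong_cmult_leftI[OF u(2)] .
  then have kc: "[k = d * u] (mod n)" using ka nm by (simp add: cong_sym)
  have "lam n S k = (\<Sum>g\<in>S. zz n (k * g))" by (rule lam_zz)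
  also have "\<dots> = (\<Sum>g\<in>S. zz n (d * (u * g)))"
  proof (rule sum.cong[OF refl])
    fix g have "[k * g = d * (u * g)] (mod n)"
      using cong_scalar_right[OF kc, of g] by (simp add: mult.assoc)
    then show "zz n (k * g) = zz n (d * (u * g))" using zz_cong[OF n] by blast
  qed
  also have "\<dots> = (\<Sum>g\<in>S. zz n (d * g))"
    unfolding S_def by (rule reindex_unit[OF n u(1)])
  also have "\<dots> = lam n S d" by (simp add: lam_zz)
  finally show ?thesis by (simp add: S_def d_def)
qed


lemma icg_set_eq: "icg_set n D = {g\<in>{1..n}. gcd g n \<in> D}"
  unfolding icg_set_def G_def by auto

lemma count_spec: "count (cay_spectrum n S) v = card {k\<in>{1..n}. lam n S k = v}"
proof -
  have "count (cay_spectrum n S) v = (\<Sum>x | x \<in># mset_set {1..n} \<and> v = lam n S x. count (mset_set {1..n}) x)"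
    unfolding cay_spectrum_def by (rule count_image_mset')
  also have "\<dots> = (\<Sum>x\<in>{k\<in>{1..n}. lam n S k = v}. 1)"
    by (rule sum.cong) auto
  finally show ?thesis by simp
qed

lemma card_gcd_in:
  fixes n :: nat and E :: "nat set"
  assumes n: "n > 0" and E: "E \<subseteq> divisors_of n"
  shows "card {k\<in>{1..n}. gcd k n \<in> E} = (\<Sum>d\<in>E. totient (n div d))"
proof -
  have finE: "finite E"
    by (rule finite_subset[OF E, of ], rule finite_subset[of _ "{..n}"])
       (use n in \<open>auto simp: divisors_of_def dest: dvd_imp_le\<close>)
  have eq: "{k\<in>{1..n}. gcd k n \<in> E} = (\<Union>d\<in>E. {k\<in>{0<..n}. gcd k n = d})" by auto
  have "card (\<Union>d\<in>E. {k\<in>{0<..n}. gcd k n = d}) = (\<Sum>d\<in>E. card {k\<in>{0<..n}. gcd k n = d})"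
    by (rule card_UN_disjoint[OF finE]) auto
  also have "\<dots> = (\<Sum>d\<in>E. totient (n div d))"
  proof (rule sum.cong[OF refl])
    fix d assume "d \<in> E"
    then have "d dvd n" using E by (auto simp: divisors_of_def)
    then show "card {k\<in>{0<..n}. gcd k n = d} = totient (n div d)"
      using card_gcd_eq_totient[OF n] by blast
  qed
  finally show ?thesis using eq by simp
qed

theorem lemma3p16:
  fixes n d0 :: nat and D1 D2 DR DT :: "nat set"
  assumes "n \<ge> 1"
    and "D1 \<subseteq> divisors_of n - {n}" and "D2 \<subseteq> divisors_of n - {n}"
    and "isospectral n (icg_set n D1) (icg_set n D2)"
    and "DR \<subseteq> divisors_of n"
    and "\<forall>d\<in>DR. lam n (icg_set n D1) d = lam n (icg_set n D2) d"
    and "DT \<subseteq> divisors_of n - DR"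
    and "d0 \<in> DT"
    and "\<forall>d\<in>DT. lam n (icg_set n D1) d = lam n (icg_set n D1) d0"
    and "(\<Sum>d\<in>DT. int (totient (n div d))) >
           int n - (\<Sum>d\<in>DR. int (totient (n div d))) - (\<Sum>d\<in>DT. int (totient (n div d)))"
  shows "(\<exists>d0'\<in>DT. lam n (icg_set n D2) d0' = lam n (icg_set n D1) d0)
         \<and> (DT = {d0} \<longrightarrow> lam n (icg_set n D1) d0 = lam n (icg_set n D2) d0)"
proof -
  have n: "n > 0" using assms(1) by simp
  define L1 where "L1 = lam n (icg_set n D1)"
  define L2 where "L2 = lam n (icg_set n D2)"
  define v where "v = L1 d0"
  have inv1: "L1 k = L1 (gcd k n)" for k
    unfolding L1_def icg_set_eq by (rule lam_gcd[OF n])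
  have inv2: "L2 k = L2 (gcd k n)" for k
    unfolding L2_def icg_set_eq by (rule lam_gcd[OF n])
  have first: "\<exists>d0'\<in>DT. L2 d0' = v"
  proof (rule ccontr)
    assume no: "\<not> (\<exists>d0'\<in>DT. L2 d0' = v)"
    define K where "K = {1..n}"
    define AR where "AR = {k\<in>K. gcd k n \<in> DR}"
    define AT where "AT = {k\<in>K. gcd k n \<in> DT}"
    define P1 where "P1 = {k\<in>K. L1 k = v}"
    define P2 where "P2 = {k\<in>K. L2 k = v}"
    have DTsub: "DT \<subseteq> divisors_of n" using assms(7) by blast
    have cAT: "card AT = (\<Sum>d\<in>DT. totient (n div d))"
      unfolding AT_def K_def by (rule card_gcd_in[OF n DTsub])
    have cAR: "card AR = (\<Sum>d\<in>DR. totient (n div d))"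
      unfolding AR_def K_def by (rule card_gcd_in[OF n assms(5)])
    have finK: "finite K" by (simp add: K_def)
    have cK: "card K = n" by (simp add: K_def)
    have disj: "AR \<inter> AT = {}" using assms(7) by (auto simp: AR_def AT_def)
    have ATP1: "AT \<subseteq> P1"
    proof
      fix k assume k: "k \<in> AT"
      have "L1 k = L1 (gcd k n)" by (rule inv1)
      also have "\<dots> = v" using k assms(9) by (auto simp: AT_def L1_def v_def)
      finally show "k \<in> P1" using k by (simp add: P1_def AT_def)
    qed
    have RR: "P1 \<inter> AR = P2 \<inter> AR"
    proof -
      have "L1 k = L2 k" if "k \<in> AR" for k
      proof -
        have "L1 k = L1 (gcd k n)" by (rule inv1)
        also have "\<dots> = L2 (gcd k n)" using that assms(6) by (auto simp: AR_def L1_def L2_def)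
        also have "\<dots> = L2 k" by (rule inv2[symmetric])
        finally show ?thesis .
      qed
      then show ?thesis by (auto simp: P1_def P2_def)
    qed
    have P2AT: "P2 \<inter> AT = {}"
    proof -
      have False if "k \<in> P2" "k \<in> AT" for k
      proof -
        have "L2 (gcd k n) = v" using that inv2[of k] by (simp add: P2_def)
        moreover have "gcd k n \<in> DT" using that by (simp add: AT_def)
        ultimately show False using no by blast
      qed
      then show ?thesis by blast
    qed
    have eqc: "card P1 = card P2"
      using assms(4) count_spec[of n "icg_set n D1" v] count_spec[of n "icg_set n D2" v]
      by (simp add: isospectral_def P1_def P2_def K_def L1_def L2_def)
    have "card (P1 \<inter> AR) + card AT = card ((P1 \<inter> AR) \<union> AT)"
      by (rule card_Un_disjoint[symmetric]) (use finK disj in \<open>auto simp: AR_def AT_def P1_def\<close>)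
    also have "\<dots> \<le> card P1"
      by (rule card_mono) (use finK ATP1 in \<open>auto simp: P1_def\<close>)
    finally have i1: "card (P1 \<inter> AR) + card AT \<le> card P1" .
    have "P2 \<subseteq> (P2 \<inter> AR) \<union> (K - (AR \<union> AT))" using P2AT by (auto simp: P2_def)
    then have "card P2 \<le> card ((P2 \<inter> AR) \<union> (K - (AR \<union> AT)))"
      by (rule card_mono[rotated]) (rule finite_subset[OF _ finK], auto simp: P2_def)
    also have "\<dots> \<le> card (P2 \<inter> AR) + card (K - (AR \<union> AT))" by (rule card_Un_le)
    also have "card (K - (AR \<union> AT)) = card K - card (AR \<union> AT)"
      by (rule card_Diff_subset) (use finK in \<open>auto simp: AR_def AT_def intro: finite_subset\<close>)
    also have "card (AR \<union> AT) = card AR + card AT"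
      by (rule card_Un_disjoint) (use finK disj in \<open>auto simp: AR_def AT_def\<close>)
    finally have i2: "card P2 \<le> card (P2 \<inter> AR) + (card K - (card AR + card AT))" .
    have le: "card AR + card AT \<le> card K"
    proof -
      have "card (AR \<union> AT) \<le> card K" by (rule card_mono[OF finK]) (auto simp: AR_def AT_def)
      moreover have "card (AR \<union> AT) = card AR + card AT"
        by (rule card_Un_disjoint) (use finK disj in \<open>auto simp: AR_def AT_def\<close>)
      ultimately show ?thesis by linarith
    qed
    have RRc: "card (P1 \<inter> AR) = card (P2 \<inter> AR)" using RR by (rule arg_cong)
    have "card AT + card AT + card AR \<le> card K" using i1 i2 eqc RRc le by linarith
    then have "int (card AT) \<le> int n - int (card AR) - int (card AT)" unfolding cK by linarith
    then show False using assms(10) unfolding cAT cAR of_nat_sum by linarith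
  qed
  then have f: "\<exists>d0'\<in>DT. lam n (icg_set n D2) d0' = lam n (icg_set n D1) d0"
    unfolding L1_def L2_def v_def .
  moreover have "DT = {d0} \<longrightarrow> lam n (icg_set n D1) d0 = lam n (icg_set n D2) d0"
  proof
    assume "DT = {d0}"
    with f show "lam n (icg_set n D1) d0 = lam n (icg_set n D2) d0" by simp
  qed
  ultimately show ?thesis by blast
qed

end
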